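(* Let $g:\mathbb{R}\to\mathbb{R}$ have the property that every bounded interval $I$ admits a modulus $\omega=\omega_I$ with $$\int_0^1\frac{\omega(t)}{t}\,dt<\infty$$ such that $g|_I$ is semi-convex on $I$ with the modulus $\omega$. Then there is a separately convex function $f:\mathbb{R}^2\to\mathbb{R}$ such that $f(u,u)=g(u)$ for each $u\in\mathbb{R}$.
   Context: A function $f:\mathbb{R}^2\to\mathbb{R}$ is called separately convex if it is convex on every line parallel to a coordinate axis. A modulus is a non-decreasing function $\omega:[0,\infty)\to[0,\infty)$ with $\lim_{t\to0+}\omega(t)=0$. A real function $g$ is semi-convex with modulus $\omega$ on an interval $I$ if $g(\alpha x+(1-\alpha)y)\le\alpha g(x)+(1-\alpha)g(y)+\alpha(1-\alpha)|x-y|\,\omega(|x-y|)$ for all $x,y\in I$ and $\alpha\in(0,1)$. *)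

theory Defs
  imports "HOL-Analysis.Analysis"
begin

definition modulus :: "(real \<Rightarrow> real) \<Rightarrow> bool" where
  "modulus \<omega> \<longleftrightarrow> mono_on {0..} \<omega> \<and> (\<forall>t\<ge>0. \<omega> t \<ge> 0) \<and> (\<omega> \<longlongrightarrow> 0) (at_right 0)"

definition semi_convex_on :: "real set \<Rightarrow> (real \<Rightarrow> real) \<Rightarrow> (real \<Rightarrow> real) \<Rightarrow> bool" where
  "semi_convex_on I \<omega> g \<longleftrightarrow>
     (\<forall>x\<in>I. \<forall>y\<in>I. \<forall>\<alpha>\<in>{0<..<1}.
        g (\<alpha> * x + (1 - \<alpha>) * y)
          \<le> \<alpha> * g x + (1 - \<alpha>) * g y + \<alpha> * (1 - \<alpha>) * \<bar>x - y\<bar> * \<omega> \<bar>x - y\<bar>)"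

definition separately_convex :: "(real \<times> real \<Rightarrow> real) \<Rightarrow> bool" where
  "separately_convex f \<longleftrightarrow>
     (\<forall>y. convex_on UNIV (\<lambda>x. f (x, y))) \<and> (\<forall>x. convex_on UNIV (\<lambda>y. f (x, y)))"

end

theory Submission
  imports Defs
begin


definition clipr :: "real \<Rightarrow> real \<Rightarrow> real" where
  "clipr r a = max (-r) (min r a)"

definition Tp :: "real \<Rightarrow> real \<Rightarrow> real \<Rightarrow> real" where
  "Tp r a b = max (- clipr r a * clipr r b) (2*r*\<bar>a-b\<bar> - r^2)"

lemma clipr_abs: "r \<ge> 0 \<Longrightarrow> \<bar>clipr r a\<bar> \<le> r"
  unfolding clipr_def by auto

lemma claim1:
  assumes r: "r > 0" and c: "\<bar>c\<bar> \<le> r"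
  shows "- clipr r a * c \<le> max (- a * c) (- r * \<bar>c\<bar>)"
proof (cases "\<bar>a\<bar> \<le> r")
  case True then have "clipr r a = a" unfolding clipr_def by auto
  then show ?thesis by simp
next
  case False
  show ?thesis
  proof (cases "a > r")
    case True then have ca: "clipr r a = r" unfolding clipr_def using r by auto
    show ?thesis
    proof (cases "c \<le> 0")
      case True
      have "r * (-c) \<le> a * (-c)" using \<open>a > r\<close> True by (intro mult_right_mono) auto
      then show ?thesis using ca by auto
    next
      case False then show ?thesis using ca by auto
    qed
  next
    case False
    then have "a < -r" using \<open>\<not> \<bar>a\<bar> \<le> r\<close> by auto
    then have ca: "clipr r a = -r" unfolding clipr_def by auto
    show ?thesis
    proof (cases "c \<ge> 0")
      case True
      have "r * c \<le> (-a) * c" using \<open>a < -r\<close> True by (intro mult_right_mono) auto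
      then show ?thesis using ca by auto
    next
      case False then show ?thesis using ca by auto
    qed
  qed
qed

lemma claim2:
  assumes r: "r > 0"
  shows "- a * clipr r b \<le> Tp r a b"
proof -
  define c where "c = clipr r b"
  have cr: "\<bar>c\<bar> \<le> r" using clipr_abs r c_def by auto
  have T: "Tp r a b = max (- clipr r a * c) (2*r*\<bar>a-b\<bar> - r^2)" unfolding Tp_def c_def ..
  show ?thesis
  proof (cases "\<bar>a\<bar> \<le> r")
    case True then have "clipr r a = a" unfolding clipr_def by auto
    then show ?thesis using T c_def by simp
  next
    case False
    show ?thesis
    proof (cases "a > r")
      case True then have ca: "clipr r a = r" unfolding clipr_def using r by auto
      show ?thesis
      proof (cases "c \<ge> 0")
        case True
        have "r * c \<le> a * c" using \<open>a > r\<close> True by (intro mult_right_mono) auto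
        then show ?thesis using ca T c_def by auto
      next
        case False
        then have "b < 0" using c_def r unfolding clipr_def by auto
        have "a * (-c) \<le> a * r" using cr \<open>a > r\<close> by (intro mult_left_mono) auto
        moreover have "a * r \<le> 2*r*\<bar>a-b\<bar> - r^2"
        proof -
          have "\<bar>a - b\<bar> \<ge> a" using \<open>b < 0\<close> \<open>a > r\<close> by auto
          then have "2*r*\<bar>a-b\<bar> \<ge> 2*r*a" using r by auto
          moreover have "r*(a - r) \<ge> 0" using r \<open>a > r\<close> by auto
          ultimately show ?thesis by (simp add: power2_eq_square algebra_simps)
        qed
        ultimately show ?thesis using T c_def by auto
      qed
    next
      case False
      then have "a < -r" using \<open>\<not> \<bar>a\<bar> \<le> r\<close> by auto
      then have ca: "clipr r a = -r" unfolding clipr_def by auto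
      show ?thesis
      proof (cases "c \<le> 0")
        case True
        have "r * (-c) \<le> (-a) * (-c)" using \<open>a < -r\<close> True by (intro mult_right_mono) auto
        then show ?thesis using ca T c_def by auto
      next
        case False
        then have "b > 0" using c_def r unfolding clipr_def by auto
        have "(-a) * c \<le> (-a) * r" using cr \<open>a < -r\<close> by (intro mult_left_mono) auto
        moreover have "(-a) * r \<le> 2*r*\<bar>a-b\<bar> - r^2"
        proof -
          have "\<bar>a - b\<bar> \<ge> -a" using \<open>b > 0\<close> \<open>a < -r\<close> by auto
          then have "2*r*\<bar>a-b\<bar> \<ge> 2*r*(-a)" using r by (intro mult_left_mono) auto
          moreover have "r*(-a - r) \<ge> 0" using r \<open>a < -r\<close> by auto
          ultimately show ?thesis by (simp add: power2_eq_square algebra_simps)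
        qed
        ultimately show ?thesis using T c_def by auto
      qed
    qed
  qed
qed

lemma claim3:
  assumes r: "r > 0"
  shows "- r * \<bar>clipr r b\<bar> \<le> Tp r a b"
proof -
  have "\<bar>clipr r a * clipr r b\<bar> \<le> r * \<bar>clipr r b\<bar>"
    unfolding abs_mult using clipr_abs[of r a] r by (intro mult_right_mono) auto
  then show ?thesis unfolding Tp_def by auto
qed

lemma Tp_alt:
  assumes r: "r > 0"
  shows "Tp r a b = max (max (- a * clipr r b) (- r * \<bar>clipr r b\<bar>)) (2*r*\<bar>a-b\<bar> - r^2)"
proof (rule antisym)
  have "- clipr r a * clipr r b \<le> max (- a * clipr r b) (- r * \<bar>clipr r b\<bar>)"
    using claim1[OF r clipr_abs[of r b]] r by auto
  then show "Tp r a b \<le> max (max (- a * clipr r b) (- r * \<bar>clipr r b\<bar>)) (2*r*\<bar>a-b\<bar> - r^2)"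
    unfolding Tp_def by auto
  show "max (max (- a * clipr r b) (- r * \<bar>clipr r b\<bar>)) (2*r*\<bar>a-b\<bar> - r^2) \<le> Tp r a b"
    using claim2[OF r, of a b] claim3[OF r, of b a] unfolding Tp_def by auto
qed

lemma Tp_sym: "Tp r a b = Tp r b a"
  unfolding Tp_def by (simp add: abs_minus_commute mult.commute)


lemma cvx_iff:
  fixes f :: "real \<Rightarrow> real"
  shows "convex_on UNIV f \<longleftrightarrow> (\<forall>x y t. 0 \<le> t \<longrightarrow> t \<le> 1 \<longrightarrow> f ((1-t)*x + t*y) \<le> (1-t) * f x + t * f y)"
proof
  assume "convex_on UNIV f" then show "\<forall>x y t. 0 \<le> t \<longrightarrow> t \<le> 1 \<longrightarrow> f ((1-t)*x + t*y) \<le> (1-t) * f x + t * f y"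
    using convex_onD[of UNIV f] by auto
next
  assume H: "\<forall>x y t. 0 \<le> t \<longrightarrow> t \<le> 1 \<longrightarrow> f ((1-t)*x + t*y) \<le> (1-t) * f x + t * f y"
  show "convex_on UNIV f"
    by (rule convex_onI) (use H in auto)
qed

lemma cvx_max:
  fixes f g :: "real \<Rightarrow> real"
  assumes "convex_on UNIV f" "convex_on UNIV g"
  shows "convex_on UNIV (\<lambda>x. max (f x) (g x))"
  unfolding cvx_iff
proof (intro allI impI)
  fix x y t :: real assume t: "0 \<le> t" "t \<le> 1"
  have 1: "f ((1-t)*x + t*y) \<le> (1-t) * f x + t * f y" using assms(1) t unfolding cvx_iff by auto
  have 2: "g ((1-t)*x + t*y) \<le> (1-t) * g x + t * g y" using assms(2) t unfolding cvx_iff by auto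
  have "(1-t) * f x \<le> (1-t) * max (f x) (g x)" "(1-t) * g x \<le> (1-t) * max (f x) (g x)"
       "t * f y \<le> t * max (f y) (g y)" "t * g y \<le> t * max (f y) (g y)"
    using t by (auto intro: mult_left_mono)
  then show "max (f ((1-t)*x + t*y)) (g ((1-t)*x + t*y)) \<le> (1-t) * max (f x) (g x) + t * max (f y) (g y)"
    using 1 2 by linarith
qed

lemma cvx_affine: "convex_on UNIV (\<lambda>x::real. \<alpha>*x + \<beta>)"
  unfolding cvx_iff by (auto simp: algebra_simps)

lemma cvx_abs: 
  assumes "c \<ge> 0"
  shows "convex_on UNIV (\<lambda>x::real. c*\<bar>x - b\<bar> + e)"
  unfolding cvx_iff
proof (intro allI impI)
  fix x y t :: real assume t: "0 \<le> t" "t \<le> 1"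
  have "\<bar>(1-t)*x + t*y - b\<bar> = \<bar>(1-t)*(x-b) + t*(y-b)\<bar>" by (simp add: algebra_simps)
  also have "\<dots> \<le> (1-t)*\<bar>x-b\<bar> + t*\<bar>y-b\<bar>" using t
    by (metis abs_mult abs_of_nonneg abs_triangle_ineq diff_ge_0_iff_ge)
  finally have "c*\<bar>(1-t)*x + t*y - b\<bar> \<le> c*((1-t)*\<bar>x-b\<bar> + t*\<bar>y-b\<bar>)"
    using assms by (intro mult_left_mono) auto
  then show "c*\<bar>(1-t)*x + t*y - b\<bar> + e \<le> (1-t) * (c*\<bar>x - b\<bar> + e) + t * (c*\<bar>y - b\<bar> + e)"
    by (simp add: algebra_simps)
qed

lemma cvx_const: "convex_on UNIV (\<lambda>x::real. e)"
  using cvx_affine[of 0 e] by simp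

lemma cvx_add: "convex_on UNIV f \<Longrightarrow> convex_on UNIV g \<Longrightarrow> convex_on UNIV (\<lambda>x::real. f x + g x)"
  by (rule convex_on_add)

lemma cvx_cmul: "c \<ge> 0 \<Longrightarrow> convex_on UNIV f \<Longrightarrow> convex_on UNIV (\<lambda>x::real. c * f x)"
  by (rule convex_on_cmul)

lemma cvx_shift: "convex_on UNIV f \<Longrightarrow> convex_on UNIV (\<lambda>x::real. f (x - u))"
  unfolding cvx_iff
proof (intro allI impI)
  fix x y t :: real assume H: "\<forall>x y t. 0 \<le> t \<longrightarrow> t \<le> 1 \<longrightarrow> f ((1-t)*x + t*y) \<le> (1-t) * f x + t * f y"
    and t: "0 \<le> t" "t \<le> 1"
  have "(1-t)*x + t*y - u = (1-t)*(x-u) + t*(y-u)" by (simp add: algebra_simps)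
  then show "f ((1-t)*x + t*y - u) \<le> (1-t) * f (x-u) + t * f (y-u)" using H t by metis
qed

lemma cvx_reflect: "convex_on UNIV f \<Longrightarrow> convex_on UNIV (\<lambda>x::real. f (- x))"
  unfolding cvx_iff
proof (intro allI impI)
  fix x y t :: real assume H: "\<forall>x y t. 0 \<le> t \<longrightarrow> t \<le> 1 \<longrightarrow> f ((1-t)*x + t*y) \<le> (1-t) * f x + t * f y"
    and t: "0 \<le> t" "t \<le> 1"
  have "- ((1-t)*x + t*y) = (1-t)*(-x) + t*(-y)" by (simp add: algebra_simps)
  then show "f (- ((1-t)*x + t*y)) \<le> (1-t) * f (-x) + t * f (-y)" using H t by metis
qed

lemma cvx_suminf:
  fixes F :: "nat \<Rightarrow> real \<Rightarrow> real"
  assumes cv: "\<And>k. convex_on UNIV (F k)" and sm: "\<And>x. summable (\<lambda>k. F k x)"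
  shows "convex_on UNIV (\<lambda>x. \<Sum>k. F k x)"
  unfolding cvx_iff
proof (intro allI impI)
  fix x y t :: real assume t: "0 \<le> t" "t \<le> 1"
  have le: "F k ((1-t)*x + t*y) \<le> (1-t) * F k x + t * F k y" for k
    using cv[of k] t unfolding cvx_iff by auto
  have s1: "summable (\<lambda>k. (1-t) * F k x)" "summable (\<lambda>k. t * F k y)"
    using sm by (auto intro: summable_mult)
  have "(\<Sum>k. F k ((1-t)*x + t*y)) \<le> (\<Sum>k. (1-t) * F k x + t * F k y)"
    by (rule suminf_le[OF le sm summable_add[OF s1]])
  also have "\<dots> = (\<Sum>k. (1-t) * F k x) + (\<Sum>k. t * F k y)"
    using s1 by (rule suminf_add[symmetric])
  also have "\<dots> = (1-t) * (\<Sum>k. F k x) + t * (\<Sum>k. F k y)"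
    using sm by (simp add: suminf_mult)
  finally show "(\<Sum>k. F k ((1-t)*x + t*y)) \<le> (1-t) * (\<Sum>k. F k x) + t * (\<Sum>k. F k y)" .
qed

lemma Tp_cvx1:
  assumes r: "r > 0"
  shows "convex_on UNIV (\<lambda>a. Tp r a b)"
proof -
  have "convex_on UNIV (\<lambda>a. max (max (- clipr r b * a + 0) (0 * a + (- r * \<bar>clipr r b\<bar>))) ((2*r)*\<bar>a-b\<bar> + (-(r^2))))"
    using r by (intro cvx_max cvx_affine cvx_abs) auto
  moreover have "(\<lambda>a. Tp r a b) = (\<lambda>a. max (max (- clipr r b * a + 0) (0 * a + (- r * \<bar>clipr r b\<bar>))) ((2*r)*\<bar>a-b\<bar> + (-(r^2))))"
    by (rule ext) (simp add: Tp_alt[OF r] mult.commute)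
  ultimately show ?thesis by simp
qed

lemma Tp_00: "r > 0 \<Longrightarrow> Tp r 0 0 = 0"
  unfolding Tp_def clipr_def by auto

lemma Tp_diag: assumes r: "r > 0" shows "Tp r t t = - min (t^2) (r^2)"
proof -
  have "(clipr r t)^2 = min (t^2) (r^2)"
  proof (cases "\<bar>t\<bar> \<le> r")
    case True
    then have "clipr r t = t" unfolding clipr_def by auto
    moreover have "t^2 \<le> r^2" using True r abs_le_square_iff[of t r] by auto
    ultimately show ?thesis by auto
  next
    case False
    then have "clipr r t = r \<or> clipr r t = -r" unfolding clipr_def by auto
    then have "(clipr r t)^2 = r^2" by auto
    moreover have "r^2 \<le> t^2" using False r abs_le_square_iff[of r t] by auto
    ultimately show ?thesis by auto
  qed
  moreover have "- min (t^2) (r^2) \<ge> - (r^2)" by auto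
  ultimately show ?thesis unfolding Tp_def by (auto simp: power2_eq_square)
qed

lemma Tp_upper: assumes r: "r > 0" shows "Tp r a b \<le> r^2 + 2*r*\<bar>a-b\<bar>"
proof -
  have "\<bar>clipr r a * clipr r b\<bar> \<le> r * r" unfolding abs_mult
    using clipr_abs[of r a] clipr_abs[of r b] r by (intro mult_mono) auto
  then have 1: "-(clipr r a * clipr r b) \<le> r * r" by linarith
  have 2: "0 \<le> 2*r*\<bar>a-b\<bar>" using r by auto
  show ?thesis unfolding Tp_def power2_eq_square
    by (intro max.boundedI) (use 1 2 r zero_le_mult_iff[of r r] in linarith)+
qed

lemma Tp_lower: assumes r: "r > 0" shows "-(r^2) \<le> Tp r a b"
  proof -
  have "-(r^2) \<le> 2*r*\<bar>a-b\<bar> - r^2" using r by auto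
  then show ?thesis unfolding Tp_def by linarith
qed


lemma dini_summable:
  fixes \<omega> :: "real \<Rightarrow> real"
  assumes mono: "mono_on {0..} \<omega>" and nonneg: "\<And>t. t \<ge> 0 \<Longrightarrow> \<omega> t \<ge> 0"
    and int: "set_nn_integral lborel {0<..<1} (\<lambda>t. ennreal (\<omega> t / t)) < \<infinity>"
  shows "summable (\<lambda>k. \<omega> ((1/2)^(k+1)))"
proof -
  define a where "a k = ((1/2::real)^(k+1))" for k
  define I where "I k = {a k ..< 2 * a k}" for k
  define c where "c k = \<omega> (a k) / (2 * a k)" for k
  have apos: "a k > 0" for k unfolding a_def by simp
  have a2: "2 * a k = (1/2)^k" for k unfolding a_def by simp
  have cnn: "c k \<ge> 0" for k unfolding c_def using nonneg[of "a k"] apos[of k] by auto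
  have uniq: "k = j" if "t \<in> I k" "t \<in> I j" for t k j
  proof (rule ccontr)
    assume "k \<noteq> j"
    then consider "k < j" | "j < k" by linarith
    then show False
    proof cases
      case 1
      then have "(1/2::real)^j \<le> (1/2)^(k+1)" by (intro power_decreasing) auto
      then show False using that unfolding I_def a_def by auto
    next
      case 2
      then have "(1/2::real)^k \<le> (1/2)^(j+1)" by (intro power_decreasing) auto
      then show False using that unfolding I_def a_def by auto
    qed
  qed
  have Isub: "I k \<subseteq> {0<..<1}" for k
  proof -
    have "(1/2::real)^k \<le> 1" by (intro power_le_one) auto
    then show ?thesis using apos[of k] a2[of k] unfolding I_def by auto
  qed
  have pw: "(\<Sum>k. ennreal (c k) * indicator (I k) t) \<le> ennreal (\<omega> t / t) * indicator {0<..<1} t" for t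
  proof (cases "\<exists>k. t \<in> I k")
    case False
    then have "(\<lambda>k. ennreal (c k) * indicator (I k) t) = (\<lambda>k. 0)" by (auto simp: indicator_def)
    then show ?thesis by simp
  next
    case True
    then obtain k0 where k0: "t \<in> I k0" by auto
    have "(\<Sum>k. ennreal (c k) * indicator (I k) t) = (\<Sum>k\<in>{k0}. ennreal (c k) * indicator (I k) t)"
      by (rule suminf_finite) (use uniq k0 in \<open>auto simp: indicator_def\<close>)
    also have "\<dots> = ennreal (c k0)" using k0 by simp
    also have "\<dots> \<le> ennreal (\<omega> t / t)"
    proof (rule ennreal_leI)
      have t: "a k0 \<le> t" "t < 2 * a k0" using k0 unfolding I_def by auto
      have "\<omega> (a k0) \<le> \<omega> t" using mono t apos[of k0] by (auto intro: mono_onD)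
      have "c k0 = \<omega> (a k0) / (2 * a k0)" unfolding c_def ..
      also have "\<dots> \<le> \<omega> t / (2 * a k0)" using \<open>\<omega> (a k0) \<le> \<omega> t\<close> apos[of k0]
        by (intro divide_right_mono) auto
      also have "\<dots> \<le> \<omega> t / t" using t apos[of k0] nonneg[of t]
        by (intro divide_left_mono) auto
      finally show "c k0 \<le> \<omega> t / t" .
    qed
    also have "\<dots> = ennreal (\<omega> t / t) * indicator {0<..<1} t" using Isub[of k0] k0 by auto
    finally show ?thesis .
  qed
  have "(\<Sum>k. ennreal (\<omega> (a k) / 2)) = (\<Sum>k. \<integral>\<^sup>+ t. ennreal (c k) * indicator (I k) t \<partial>lborel)"
  proof (rule suminf_cong)
    fix k
    have "(\<integral>\<^sup>+ t. ennreal (c k) * indicator (I k) t \<partial>lborel) = ennreal (c k) * emeasure lborel (I k)"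
      by (rule nn_integral_cmult_indicator) (simp add: I_def)
    also have "\<dots> = ennreal (c k) * ennreal (a k)" unfolding I_def using apos[of k] by simp
    also have "\<dots> = ennreal (c k * a k)" using cnn[of k] apos[of k] by (simp add: ennreal_mult)
    also have "c k * a k = \<omega> (a k) / 2" unfolding c_def using apos[of k] by simp
    finally show "ennreal (\<omega> (a k) / 2) = (\<integral>\<^sup>+ t. ennreal (c k) * indicator (I k) t \<partial>lborel)" by simp
  qed
  also have "\<dots> = (\<integral>\<^sup>+ t. (\<Sum>k. ennreal (c k) * indicator (I k) t) \<partial>lborel)"
    by (rule nn_integral_suminf[symmetric]) (simp add: I_def)
  also have "\<dots> \<le> set_nn_integral lborel {0<..<1} (\<lambda>t. ennreal (\<omega> t / t))"
    by (rule nn_integral_mono) (rule pw)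
  also have "\<dots> < \<infinity>" by (rule int)
  finally have "(\<Sum>k. ennreal (\<omega> (a k) / 2)) \<noteq> top" by auto
  then have "summable (\<lambda>k. \<omega> (a k) / 2)"
    by (intro summable_suminf_not_top) (use nonneg apos in \<open>auto simp: less_imp_le\<close>)
  then have "summable (\<lambda>k. 2 * (\<omega> (a k) / 2))" by (rule summable_mult)
  then show ?thesis unfolding a_def by simp
qed


definition rk :: "nat \<Rightarrow> real" where "rk k = (1/2)^k"

definition wT :: "(real \<Rightarrow> real) \<Rightarrow> nat \<Rightarrow> real \<Rightarrow> real \<Rightarrow> real" where
  "wT \<omega> k a b = (2 * \<omega> (4 * rk k) / rk k) * Tp (rk k) a b"

definition Tloc :: "(real \<Rightarrow> real) \<Rightarrow> real \<Rightarrow> real \<Rightarrow> real" where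
  "Tloc \<omega> a b = (\<Sum>k. wT \<omega> k a b)"

definition Zs :: "(real \<Rightarrow> real) \<Rightarrow> real" where
  "Zs \<omega> = (\<Sum>k. \<omega> (4 * rk k))"

lemma rk_pos: "rk k > 0" unfolding rk_def by simp
lemma rk_le1: "rk k \<le> 1" unfolding rk_def by (intro power_le_one) auto

locale dmod =
  fixes \<omega> :: "real \<Rightarrow> real"
  assumes mono: "mono_on {0..} \<omega>" and nonneg: "\<And>t. t \<ge> 0 \<Longrightarrow> \<omega> t \<ge> 0"
    and int: "set_nn_integral lborel {0<..<1} (\<lambda>t. ennreal (\<omega> t / t)) < \<infinity>"
begin

lemma sumZ: "summable (\<lambda>k. \<omega> (4 * rk k))"
proof -
  have "summable (\<lambda>k. \<omega> ((1/2)^(k+1)))" by (rule dini_summable[OF mono nonneg int])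
  moreover have "(\<lambda>k. \<omega> (4 * rk (k + 3))) = (\<lambda>k. \<omega> ((1/2)^(k+1)))"
  proof (rule ext)
    fix k
    have "4 * rk (k + 3) = (1/2)^(k+1)" unfolding rk_def power_add by (simp add: power3_eq_cube)
    then show "\<omega> (4 * rk (k + 3)) = \<omega> ((1/2)^(k+1))" by (rule arg_cong)
  qed
  ultimately show ?thesis using summable_iff_shift[of "\<lambda>k. \<omega> (4 * rk k)" 3] by simp
qed

lemma wT_abs: "\<bar>wT \<omega> k a b\<bar> \<le> \<omega> (4 * rk k) * (2 + 4 * \<bar>a - b\<bar>)"
proof -
  define r where "r = rk k"
  have r: "r > 0" "r \<le> 1" using rk_pos rk_le1 r_def by auto
  have w: "\<omega> (4 * r) \<ge> 0" using nonneg r by auto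
  have "\<bar>Tp r a b\<bar> \<le> r^2 + 2*r*\<bar>a-b\<bar>"
  proof -
    have "Tp r a b \<le> r^2 + 2*r*\<bar>a-b\<bar>" "-(r^2) \<le> Tp r a b" "0 \<le> 2*r*\<bar>a-b\<bar>"
      using Tp_upper[OF r(1)] Tp_lower[OF r(1)] r by auto
    then show ?thesis by (simp add: abs_le_iff)
  qed
  then have "\<bar>Tp r a b\<bar> / r \<le> (r^2 + 2*r*\<bar>a-b\<bar>) / r" using r by (intro divide_right_mono) auto
  also have "\<dots> = r + 2*\<bar>a-b\<bar>" using r by (simp add: power2_eq_square field_simps)
  also have "\<dots> \<le> 1 + 2*\<bar>a-b\<bar>" using r by auto
  finally have *: "\<bar>Tp r a b\<bar> / r \<le> 1 + 2*\<bar>a-b\<bar>" .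
  have "\<bar>wT \<omega> k a b\<bar> = 2 * \<omega> (4 * r) * (\<bar>Tp r a b\<bar> / r)"
    unfolding wT_def r_def[symmetric] using w r by (simp add: abs_mult)
  also have "\<dots> \<le> 2 * \<omega> (4 * r) * (1 + 2*\<bar>a-b\<bar>)" using * w by (intro mult_left_mono) auto
  finally show ?thesis unfolding r_def by (simp add: algebra_simps)
qed

lemma wT_summable: "summable (\<lambda>k. wT \<omega> k a b)"
proof (rule summable_comparison_test')
  show "summable (\<lambda>k. \<omega> (4 * rk k) * (2 + 4 * \<bar>a - b\<bar>))" using sumZ by (rule summable_mult2)
  show "norm (wT \<omega> k a b) \<le> \<omega> (4 * rk k) * (2 + 4 * \<bar>a - b\<bar>)" for k using wT_abs by simp
qed

lemma Tloc_upper: "Tloc \<omega> a b \<le> (2 + 4 * \<bar>a - b\<bar>) * Zs \<omega>"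
proof -
  have "Tloc \<omega> a b \<le> (\<Sum>k. \<omega> (4 * rk k) * (2 + 4 * \<bar>a - b\<bar>))"
    unfolding Tloc_def
    by (rule suminf_le[OF _ wT_summable summable_mult2[OF sumZ]]) (use wT_abs abs_le_iff in blast)
  also have "\<dots> = (2 + 4 * \<bar>a - b\<bar>) * Zs \<omega>" unfolding Zs_def using sumZ
    by (simp add: suminf_mult2[symmetric] mult.commute)
  finally show ?thesis .
qed

lemma Tloc_cvx: "convex_on UNIV (\<lambda>a. Tloc \<omega> a b)"
  unfolding Tloc_def
proof (rule cvx_suminf)
  fix k
  have "2 * \<omega> (4 * rk k) / rk k \<ge> 0" using nonneg[of "4 * rk k"] rk_pos[of k] by auto
  then show "convex_on UNIV (\<lambda>a. wT \<omega> k a b)" unfolding wT_def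
    by (intro cvx_cmul Tp_cvx1 rk_pos)
qed (rule wT_summable)

lemma Tloc_sym: "Tloc \<omega> a b = Tloc \<omega> b a"
  unfolding Tloc_def wT_def using Tp_sym by simp

lemma wT_diag: "wT \<omega> k t t = - (2 * \<omega> (4 * rk k) / rk k) * min (t^2) (rk k ^ 2)"
  unfolding wT_def Tp_diag[OF rk_pos] by simp

lemma wT_diag_nonpos: "wT \<omega> k t t \<le> 0"
proof -
  have "2 * \<omega> (4 * rk k) / rk k \<ge> 0" using nonneg[of "4 * rk k"] rk_pos[of k] by auto
  moreover have "min (t^2) (rk k ^ 2) \<ge> 0" by auto
  ultimately have "(2 * \<omega> (4 * rk k) / rk k) * min (t^2) (rk k ^ 2) \<ge> 0" by (rule mult_nonneg_nonneg)
  then show ?thesis by (simp only: wT_diag mult_minus_left)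
qed

lemma Tloc_00: "Tloc \<omega> 0 0 = 0"
  unfolding Tloc_def wT_def Tp_00[OF rk_pos] by simp

lemma Tloc_diag_le_term: "Tloc \<omega> t t \<le> wT \<omega> j t t"
proof -
  have "(\<Sum>k\<in>{j}. - wT \<omega> k t t) \<le> (\<Sum>k. - wT \<omega> k t t)"
    by (rule sum_le_suminf) (use wT_summable summable_minus wT_diag_nonpos in auto)
  also have "\<dots> = - Tloc \<omega> t t" unfolding Tloc_def using wT_summable by (simp add: suminf_minus)
  finally show ?thesis by simp
qed

lemma Tloc_diag_nonpos: "Tloc \<omega> t t \<le> 0"
  using Tloc_diag_le_term[of t 0] wT_diag_nonpos[of 0 t] by linarith

lemma Tloc_diag:
  assumes t: "\<bar>t\<bar> \<le> 1"
  shows "Tloc \<omega> t t \<le> - \<bar>t\<bar> * \<omega> (2 * \<bar>t\<bar>)"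
proof (cases "t = 0")
  case True then show ?thesis using Tloc_diag_nonpos by simp
next
  case False
  then have tp: "\<bar>t\<bar> > 0" by auto
  have ex: "\<exists>n. rk (n+1) < \<bar>t\<bar>"
  proof -
    obtain n where "(1/2::real)^n < \<bar>t\<bar>" using real_arch_pow_inv[OF tp, of "1/2"] by auto
    moreover have "(1/2::real)^(n+1) \<le> (1/2)^n" by (intro power_decreasing) auto
    ultimately show ?thesis unfolding rk_def by (intro exI[of _ n]) auto
  qed
  define k where "k = (LEAST n. rk (n+1) < \<bar>t\<bar>)"
  have k1: "rk (k+1) < \<bar>t\<bar>" unfolding k_def by (rule LeastI_ex[OF ex])
  have k2: "\<bar>t\<bar> \<le> rk k"
  proof (cases k)
    case 0 then show ?thesis using t unfolding rk_def by simp
  next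
    case (Suc k')
    have "\<not> rk (k'+1) < \<bar>t\<bar>"
    proof
      assume "rk (k'+1) < \<bar>t\<bar>"
      then have "k \<le> k'" unfolding k_def by (rule Least_le)
      then show False using Suc by simp
    qed
    then show ?thesis using Suc by simp
  qed
  have rr: "rk k = 2 * rk (k+1)" unfolding rk_def by simp
  have "Tloc \<omega> t t \<le> wT \<omega> (k+1) t t" by (rule Tloc_diag_le_term)
  also have "\<dots> = - (2 * \<omega> (4 * rk (k+1)) / rk (k+1)) * (rk (k+1))^2"
  proof -
    have "(rk (k+1))^2 \<le> t^2" using k1 rk_pos[of "k+1"] abs_le_square_iff[of "rk (k+1)" t] by auto
    then show ?thesis unfolding wT_diag by (simp add: min_def)
  qed
  also have "\<dots> = - \<omega> (2 * rk k) * rk k" using rk_pos[of "k+1"] rr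
    by (simp add: power2_eq_square field_simps)
  also have "\<dots> \<le> - \<omega> (2 * \<bar>t\<bar>) * \<bar>t\<bar>"
  proof -
    have "\<omega> (2 * \<bar>t\<bar>) \<le> \<omega> (2 * rk k)" using k2 by (intro mono_onD[OF mono]) auto
    moreover have "\<omega> (2 * \<bar>t\<bar>) \<ge> 0" using nonneg by auto
    ultimately have "\<omega> (2 * \<bar>t\<bar>) * \<bar>t\<bar> \<le> \<omega> (2 * rk k) * rk k"
      using k2 by (intro mult_mono) auto
    then show ?thesis by simp
  qed
  finally show ?thesis by (simp add: mult.commute)
qed

end


definition F0 :: "real \<Rightarrow> real \<Rightarrow> real" where
  "F0 a b = - a*b + max (-a) 0 * max (-b) 0"

lemma F0_alt: "F0 a b = (if b \<ge> 0 then -a*b + 0 else max (-b * a + 0) (0 * a + 0))"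
proof (cases "b \<ge> 0")
  case True then show ?thesis unfolding F0_def by auto
next
  case False
  show ?thesis
  proof (cases "a \<ge> 0")
    case True
    have "- a * b \<ge> 0" using True False by (simp add: mult_nonneg_nonpos)
    then show ?thesis using True False unfolding F0_def by (auto simp: mult.commute max_def)
  next
    case F2: False
    have "- a * b \<le> 0" using F2 False by (simp add: mult_nonpos_nonpos)
    then show ?thesis using F2 False unfolding F0_def by (auto simp: max_def mult.commute)
  qed
qed

lemma F0_cvx: "convex_on UNIV (\<lambda>a. F0 a b)"
proof (cases "b \<ge> 0")
  case True
  then have "(\<lambda>a. F0 a b) = (\<lambda>a. (-b) * a + 0)" by (auto simp: F0_alt)
  then show ?thesis using cvx_affine by metis
next
  case False
  then have "(\<lambda>a. F0 a b) = (\<lambda>a. max (-b * a + 0) (0 * a + 0))" by (auto simp: F0_alt)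
  then show ?thesis using cvx_max[OF cvx_affine cvx_affine] by metis
qed

lemma F0_sym: "F0 a b = F0 b a" unfolding F0_def by (simp add: mult.commute)

lemma F0_diag: "F0 t t = - ((max t 0)^2)"
  unfolding F0_def by (cases "t \<ge> 0") (auto simp: power2_eq_square)

lemma F0_zero: "a \<le> 0 \<Longrightarrow> b \<le> 0 \<Longrightarrow> F0 a b = 0"
  unfolding F0_def by auto

definition phi :: "nat \<Rightarrow> real \<Rightarrow> real" where
  "phi k u = (max (u - real k) 0)^2 + (max (-u - real k) 0)^2"
definition dphi :: "nat \<Rightarrow> real \<Rightarrow> real" where
  "dphi k u = 2 * max (u - real k) 0 - 2 * max (-u - real k) 0"
definition G2 :: "nat \<Rightarrow> real \<Rightarrow> real \<Rightarrow> real" where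
  "G2 k x y = F0 (x - real k) (y - real k) + F0 (-x - real k) (-y - real k)"

lemma G2_diag: "G2 k u u = - phi k u"
  unfolding G2_def phi_def F0_diag by simp

lemma G2_sym: "G2 k x y = G2 k y x"
  unfolding G2_def using F0_sym by simp

lemma G2_cvx: "convex_on UNIV (\<lambda>x. G2 k x y)"
  unfolding G2_def
proof (rule cvx_add)
  show "convex_on UNIV (\<lambda>x. F0 (x - real k) (y - real k))"
    using cvx_shift[OF F0_cvx, of "real k" "y - real k"] .
  have "convex_on UNIV (\<lambda>x. F0 (- x - real k) (-y - real k))"
    using cvx_reflect[OF cvx_shift[OF F0_cvx, of "real k" "-y - real k"]] by simp
  then show "convex_on UNIV (\<lambda>x. F0 (- x - real k) (-y - real k))" .
qed

lemma G2_zero: "\<bar>x\<bar> \<le> real k \<Longrightarrow> \<bar>y\<bar> \<le> real k \<Longrightarrow> G2 k x y = 0"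
  unfolding G2_def by (simp add: F0_zero)

lemma phi_zero: "\<bar>u\<bar> \<le> real k \<Longrightarrow> phi k u = 0"
  unfolding phi_def by auto
lemma dphi_zero: "\<bar>u\<bar> \<le> real k \<Longrightarrow> dphi k u = 0"
  unfolding dphi_def by auto

lemma phi_nonneg: "phi k u \<ge> 0" unfolding phi_def by auto

lemma phi_ge: "\<bar>u\<bar> \<ge> real k \<Longrightarrow> phi k u \<ge> (\<bar>u\<bar> - real k)^2"
  unfolding phi_def by (cases "u \<ge> 0") auto

definition psi :: "real \<Rightarrow> real" where "psi v = (max v 0)^2"

lemma Dpsi_nonneg: "psi v - psi v0 - 2 * max v0 0 * (v - v0) \<ge> 0"
proof (cases "v0 \<le> 0")
  case True then show ?thesis unfolding psi_def by auto
next
  case False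
  show ?thesis
  proof (cases "v \<ge> 0")
    case True
    have "psi v - psi v0 - 2 * max v0 0 * (v - v0) = (v - v0)^2"
      unfolding psi_def using True False by (simp add: power2_eq_square algebra_simps)
    then show ?thesis by simp
  next
    case F2: False
    have "psi v - psi v0 - 2 * max v0 0 * (v - v0) = v0 * v0 + 2 * v0 * (- v)"
      unfolding psi_def using F2 False by (simp add: power2_eq_square algebra_simps)
    moreover have "v0 * v0 \<ge> 0" using False by auto
    moreover have "v0 * (-v) \<ge> 0" using F2 False by (intro mult_nonneg_nonneg) auto
    ultimately show ?thesis by linarith
  qed
qed

lemma Dphi_eq: "phi k u - phi k u0 - dphi k u0 * (u - u0) =
  (psi (u - real k) - psi (u0 - real k) - 2 * max (u0 - real k) 0 * ((u - real k) - (u0 - real k)))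
  + (psi (-u - real k) - psi (-u0 - real k) - 2 * max (-u0 - real k) 0 * ((-u - real k) - (-u0 - real k)))"
  unfolding phi_def dphi_def psi_def by (simp add: algebra_simps)

lemma Dphi_nonneg: "phi k u - phi k u0 - dphi k u0 * (u - u0) \<ge> 0"
  unfolding Dphi_eq using Dpsi_nonneg[of "u - real k" "u0 - real k"] Dpsi_nonneg[of "-u - real k" "-u0 - real k"]
  by linarith

lemma Dphi_far1:
  assumes "\<bar>u0\<bar> \<le> real k" "\<bar>u\<bar> \<ge> real k"
  shows "phi k u - phi k u0 - dphi k u0 * (u - u0) \<ge> (\<bar>u\<bar> - real k)^2"
  using phi_zero[OF assms(1)] dphi_zero[OF assms(1)] phi_ge[OF assms(2)] by simp

lemma Dphi_far2:
  assumes "\<bar>m\<bar> \<le> real k" "\<bar>u0\<bar> \<ge> real k"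
  shows "phi k m - phi k u0 - dphi k u0 * (m - u0) \<ge> (\<bar>u0\<bar> - real k)^2"
proof (cases "u0 \<ge> 0")
  case True
  then have u0: "u0 \<ge> real k" using assms by auto
  have "phi k m - phi k u0 - dphi k u0 * (m - u0) = (u0 - real k) * (u0 + real k - 2 * m)"
    unfolding phi_def dphi_def using u0 assms(1) by (simp add: power2_eq_square algebra_simps)
  also have "\<dots> \<ge> (u0 - real k) * (u0 - real k)" using u0 assms(1) by (intro mult_left_mono) auto
  finally show ?thesis using True by (simp add: power2_eq_square)
next
  case False
  then have u0: "-u0 \<ge> real k" using assms by auto
  have "phi k m - phi k u0 - dphi k u0 * (m - u0) = (-u0 - real k) * (-u0 + real k + 2 * m)"
    unfolding phi_def dphi_def using u0 assms(1) by (simp add: power2_eq_square algebra_simps)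
  also have "\<dots> \<ge> (-u0 - real k) * (-u0 - real k)" using u0 assms(1) by (intro mult_left_mono) auto
  finally show ?thesis using False by (simp add: power2_eq_square)
qed


lemma fin_summable:
  fixes f :: "nat \<Rightarrow> real"
  assumes "\<And>k. real k \<ge> B \<Longrightarrow> f k = 0"
  shows "summable f"
proof -
  have "f sums (\<Sum>n\<in>{..<nat \<lceil>B\<rceil>}. f n)"
  proof (rule sums_finite)
    fix n assume "n \<notin> {..<nat \<lceil>B\<rceil>}"
    then have "\<not> n < nat \<lceil>B\<rceil>" by auto
    then have "nat \<lceil>B\<rceil> \<le> n" by (simp only: not_less)
    then have "real (nat \<lceil>B\<rceil>) \<le> real n" by (rule of_nat_mono)
    then have "real n \<ge> B" using real_nat_ceiling_ge[of B] by linarith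
    then show "f n = 0" by (rule assms)
  qed simp
  then show ?thesis by (rule sums_summable)
qed

definition Gam :: "(nat \<Rightarrow> real) \<Rightarrow> real \<Rightarrow> real \<Rightarrow> real" where
  "Gam c x y = (\<Sum>k. c k * G2 k x y)"
definition gam :: "(nat \<Rightarrow> real) \<Rightarrow> real \<Rightarrow> real" where
  "gam c u = (\<Sum>k. c k * phi k u)"
definition dgam :: "(nat \<Rightarrow> real) \<Rightarrow> real \<Rightarrow> real" where
  "dgam c u = (\<Sum>k. c k * dphi k u)"

lemma sG2: "summable (\<lambda>k. c k * G2 k x y)"
  by (rule fin_summable[of "max \<bar>x\<bar> \<bar>y\<bar>"]) (simp add: G2_zero)
lemma sphi: "summable (\<lambda>k. c k * phi k u)"
  by (rule fin_summable[of "\<bar>u\<bar>"]) (simp add: phi_zero)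
lemma sdphi: "summable (\<lambda>k. c k * dphi k u)"
  by (rule fin_summable[of "\<bar>u\<bar>"]) (simp add: dphi_zero)

lemma Gam_cvx:
  assumes "\<And>k. c k \<ge> 0"
  shows "convex_on UNIV (\<lambda>x. Gam c x y)"
  unfolding Gam_def
  by (rule cvx_suminf) (use assms cvx_cmul G2_cvx sG2 in auto)

lemma Gam_sym: "Gam c x y = Gam c y x"
  unfolding Gam_def using G2_sym by simp

lemma Gam_diag: "Gam c u u = - gam c u"
  unfolding Gam_def gam_def G2_diag using sphi by (simp add: suminf_minus[symmetric])

lemma Dgam_eq: "gam c u - gam c u0 - dgam c u0 * (u - u0) =
   (\<Sum>k. c k * (phi k u - phi k u0 - dphi k u0 * (u - u0)))"
proof -
  have s3: "summable (\<lambda>k. c k * dphi k u0 * (u - u0))" using sdphi by (rule summable_mult2)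
  have "(\<Sum>k. c k * (phi k u - phi k u0 - dphi k u0 * (u - u0)))
      = (\<Sum>k. (c k * phi k u - c k * phi k u0) - c k * dphi k u0 * (u - u0))"
    by (simp add: algebra_simps)
  also have "\<dots> = (\<Sum>k. c k * phi k u - c k * phi k u0) - (\<Sum>k. c k * dphi k u0 * (u - u0))"
    by (rule suminf_diff[symmetric]) (use summable_diff[OF sphi sphi] s3 in auto)
  also have "(\<Sum>k. c k * phi k u - c k * phi k u0) = gam c u - gam c u0"
    unfolding gam_def by (rule suminf_diff[symmetric]) (use sphi in auto)
  also have "(\<Sum>k. c k * dphi k u0 * (u - u0)) = dgam c u0 * (u - u0)"
    unfolding dgam_def using sdphi by (rule suminf_mult2[symmetric])
  finally show ?thesis by simp
qed

lemma Dgam_ge: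
  assumes c: "\<And>k. c k \<ge> 0"
  shows "gam c u - gam c u0 - dgam c u0 * (u - u0) \<ge> c j * (phi j u - phi j u0 - dphi j u0 * (u - u0))"
proof -
  have sm: "summable (\<lambda>k. c k * (phi k u - phi k u0 - dphi k u0 * (u - u0)))"
    by (rule fin_summable[of "max \<bar>u\<bar> \<bar>u0\<bar>"]) (simp add: phi_zero dphi_zero)
  have "(\<Sum>k\<in>{j}. c k * (phi k u - phi k u0 - dphi k u0 * (u - u0))) \<le>
        (\<Sum>k. c k * (phi k u - phi k u0 - dphi k u0 * (u - u0)))"
    by (rule sum_le_suminf[OF sm]) (use c Dphi_nonneg in \<open>auto intro: mult_nonneg_nonneg\<close>)
  then show ?thesis unfolding Dgam_eq by simp
qed

lemma Dgam_nonneg: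
  assumes c: "\<And>k. c k \<ge> 0"
  shows "gam c u - gam c u0 - dgam c u0 * (u - u0) \<ge> 0"
proof -
  have "c 0 * (phi 0 u - phi 0 u0 - dphi 0 u0 * (u - u0)) \<ge> 0"
    using c[of 0] Dphi_nonneg[of 0 u u0] by (rule mult_nonneg_nonneg)
  moreover have "gam c u - gam c u0 - dgam c u0 * (u - u0) \<ge> c 0 * (phi 0 u - phi 0 u0 - dphi 0 u0 * (u - u0))"
    by (rule Dgam_ge[OF c])
  ultimately show ?thesis by linarith
qed


definition scp :: "(real \<Rightarrow> real) \<Rightarrow> (real \<Rightarrow> real) \<Rightarrow> real \<Rightarrow> real \<Rightarrow> real" where
  "scp g \<omega> hi u0 = Inf ((\<lambda>\<delta>. (g (u0 + \<delta>) - g u0) / \<delta> + \<omega> (2 * \<delta>)) ` {0<..hi - u0})"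

locale scx =
  fixes g :: "real \<Rightarrow> real" and \<omega> :: "real \<Rightarrow> real" and lo hi :: real
  assumes sc: "semi_convex_on {lo..hi} \<omega> g"
    and mono: "mono_on {0..} \<omega>" and nonneg: "\<And>t. t \<ge> 0 \<Longrightarrow> \<omega> t \<ge> 0"
begin

lemma key:
  assumes "\<eta> > 0" "\<delta> > 0" "u0 - \<eta> \<ge> lo" "u0 + \<delta> \<le> hi"
  shows "(g u0 - g (u0 - \<eta>)) / \<eta> - \<omega> (2 * \<eta>) \<le> (g (u0 + \<delta>) - g u0) / \<delta> + \<omega> (2 * \<delta>)"
proof -
  define x where "x = u0 - \<eta>"
  define y where "y = u0 + \<delta>"
  define \<alpha> where "\<alpha> = \<delta> / (\<eta> + \<delta>)"
  have ep: "\<eta> + \<delta> > 0" using assms by auto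
  have a: "\<alpha> \<in> {0<..<1}" unfolding \<alpha>_def using assms by (auto simp: field_simps)
  have xy: "x \<in> {lo..hi}" "y \<in> {lo..hi}" unfolding x_def y_def using assms by auto
  have c1: "\<delta> * x + \<eta> * y = (\<eta> + \<delta>) * u0" by (simp add: x_def y_def algebra_simps)
  have oa: "1 - \<alpha> = \<eta> / (\<eta> + \<delta>)" unfolding \<alpha>_def using ep by (simp add: field_simps)
  have c2: "\<alpha> * x + (1 - \<alpha>) * y = (\<delta> * x + \<eta> * y) / (\<eta> + \<delta>)"
    unfolding oa unfolding \<alpha>_def by (simp add: add_divide_distrib)
  have comb: "\<alpha> * x + (1 - \<alpha>) * y = u0" unfolding c2 c1 using ep by simp
  have d: "\<bar>x - y\<bar> = \<eta> + \<delta>" unfolding x_def y_def using assms by auto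
  have "g u0 \<le> \<alpha> * g x + (1 - \<alpha>) * g y + \<alpha> * (1 - \<alpha>) * (\<eta> + \<delta>) * \<omega> (\<eta> + \<delta>)"
    using sc xy a comb d unfolding semi_convex_on_def by metis
  then have "(\<eta> + \<delta>) * g u0 \<le> (\<eta> + \<delta>) * (\<alpha> * g x + (1 - \<alpha>) * g y + \<alpha> * (1 - \<alpha>) * (\<eta> + \<delta>) * \<omega> (\<eta> + \<delta>))"
    using ep by (intro mult_left_mono) auto
  also have "\<dots> = (\<alpha> * (\<eta> + \<delta>)) * g x + ((1 - \<alpha>) * (\<eta> + \<delta>)) * g y
      + (\<alpha> * (\<eta> + \<delta>)) * ((1 - \<alpha>) * (\<eta> + \<delta>)) * \<omega> (\<eta> + \<delta>)"
    by (simp add: algebra_simps)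
  also have "\<alpha> * (\<eta> + \<delta>) = \<delta>" unfolding \<alpha>_def using ep by simp
  also have "(1 - \<alpha>) * (\<eta> + \<delta>) = \<eta>" unfolding oa using ep by simp
  finally have "\<delta> * (g u0 - g x) \<le> \<eta> * (g y - g u0) + \<delta> * \<eta> * \<omega> (\<eta> + \<delta>)"
    by (simp add: algebra_simps)
  then have "\<delta> * (g u0 - g x) / (\<delta> * \<eta>) \<le> (\<eta> * (g y - g u0) + \<delta> * \<eta> * \<omega> (\<eta> + \<delta>)) / (\<delta> * \<eta>)"
    using assms by (intro divide_right_mono) auto
  moreover have "\<delta> * (g u0 - g x) / (\<delta> * \<eta>) = (g u0 - g x) / \<eta>" using assms by simp
  moreover have "(\<eta> * (g y - g u0) + \<delta> * \<eta> * \<omega> (\<eta> + \<delta>)) / (\<delta> * \<eta>) = (g y - g u0) / \<delta> + \<omega> (\<eta> + \<delta>)"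
    using assms by (simp add: add_divide_distrib)
  ultimately have 1: "(g u0 - g x) / \<eta> \<le> (g y - g u0) / \<delta> + \<omega> (\<eta> + \<delta>)" by simp
  have "\<omega> (\<eta> + \<delta>) \<le> \<omega> (2 * \<eta>) + \<omega> (2 * \<delta>)"
  proof (cases "\<eta> \<le> \<delta>")
    case True
    then have "\<omega> (\<eta> + \<delta>) \<le> \<omega> (2 * \<delta>)" using assms by (intro mono_onD[OF mono]) auto
    then show ?thesis using nonneg[of "2 * \<eta>"] assms by auto
  next
    case False
    then have "\<omega> (\<eta> + \<delta>) \<le> \<omega> (2 * \<eta>)" using assms by (intro mono_onD[OF mono]) auto
    then show ?thesis using nonneg[of "2 * \<delta>"] assms by auto
  qed
  then show ?thesis using 1 unfolding x_def y_def by linarith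
qed

context
  fixes u0 assumes u0: "lo < u0" "u0 < hi"
begin

definition "SP = (\<lambda>\<delta>. (g (u0 + \<delta>) - g u0) / \<delta> + \<omega> (2 * \<delta>)) ` {0<..hi - u0}"

lemma SP_ne: "SP \<noteq> {}" unfolding SP_def using u0 by auto

lemma SP_bdd: "bdd_below SP"
proof -
  have *: "(g u0 - g (u0 - (u0 - lo))) / (u0 - lo) - \<omega> (2 * (u0 - lo)) \<le> (g (u0 + \<delta>) - g u0) / \<delta> + \<omega> (2 * \<delta>)"
    if "\<delta> \<in> {0<..hi - u0}" for \<delta>
    by (rule key) (use u0 that in auto)
  have "\<forall>s\<in>SP. (g u0 - g (u0 - (u0 - lo))) / (u0 - lo) - \<omega> (2 * (u0 - lo)) \<le> s"
    unfolding SP_def using * by blast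
  then show ?thesis unfolding bdd_below_def by blast
qed

lemma scp_eq: "scp g \<omega> hi u0 = Inf SP" unfolding scp_def SP_def ..

lemma scp_upper:
  assumes "0 < \<delta>" "u0 + \<delta> \<le> hi"
  shows "scp g \<omega> hi u0 \<le> (g (u0 + \<delta>) - g u0) / \<delta> + \<omega> (2 * \<delta>)"
  unfolding scp_eq by (rule cInf_lower[OF _ SP_bdd]) (use assms in \<open>auto simp: SP_def\<close>)

lemma scp_lower:
  assumes "0 < \<eta>" "u0 - \<eta> \<ge> lo"
  shows "(g u0 - g (u0 - \<eta>)) / \<eta> - \<omega> (2 * \<eta>) \<le> scp g \<omega> hi u0"
  unfolding scp_eq by (rule cInf_greatest[OF SP_ne]) (use assms key in \<open>auto simp: SP_def\<close>)

lemma lower_bound: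
  assumes u: "u \<in> {lo..hi}"
  shows "g u \<ge> g u0 + scp g \<omega> hi u0 * (u - u0) - \<bar>u - u0\<bar> * \<omega> (2 * \<bar>u - u0\<bar>)"
proof -
  consider "u = u0" | "u > u0" | "u < u0" by linarith
  then show ?thesis
  proof cases
    case 1 then show ?thesis by simp
  next
    case 2
    define \<delta> where "\<delta> = u - u0"
    have d: "\<delta> > 0" "u0 + \<delta> \<le> hi" "u = u0 + \<delta>" using 2 u unfolding \<delta>_def by auto
    have "scp g \<omega> hi u0 * \<delta> \<le> ((g (u0 + \<delta>) - g u0) / \<delta> + \<omega> (2 * \<delta>)) * \<delta>"
      using scp_upper[OF d(1,2)] d by (intro mult_right_mono) auto
    also have "\<dots> = g (u0 + \<delta>) - g u0 + \<delta> * \<omega> (2 * \<delta>)" using d by (simp add: field_simps)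
    finally have *: "scp g \<omega> hi u0 * \<delta> \<le> g u - g u0 + \<delta> * \<omega> (2 * \<delta>)" using d(3) by simp
    have e: "u - u0 = \<delta>" "\<bar>\<delta>\<bar> = \<delta>" using d by auto
    show ?thesis unfolding e using * by linarith
  next
    case 3
    define \<eta> where "\<eta> = u0 - u"
    have d: "\<eta> > 0" "u0 - \<eta> \<ge> lo" "u = u0 - \<eta>" using 3 u unfolding \<eta>_def by auto
    have "((g u0 - g (u0 - \<eta>)) / \<eta> - \<omega> (2 * \<eta>)) * \<eta> \<le> scp g \<omega> hi u0 * \<eta>"
      using scp_lower[OF d(1,2)] d by (intro mult_right_mono) auto
    moreover have "((g u0 - g (u0 - \<eta>)) / \<eta> - \<omega> (2 * \<eta>)) * \<eta> = g u0 - g (u0 - \<eta>) - \<eta> * \<omega> (2 * \<eta>)"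
      using d by (simp add: field_simps)
    ultimately have *: "g u0 - g u - \<eta> * \<omega> (2 * \<eta>) \<le> scp g \<omega> hi u0 * \<eta>" using d(3) by simp
    have e: "u - u0 = - \<eta>" "\<bar>- \<eta>\<bar> = \<eta>" using d by auto
    show ?thesis unfolding e using * by (simp add: algebra_simps)
  qed
qed

end
end


locale mainloc =
  fixes g :: "real \<Rightarrow> real" and Om :: "nat \<Rightarrow> real \<Rightarrow> real"
  assumes Om: "\<And>n. modulus (Om n) \<and> set_nn_integral lborel {0<..<1} (\<lambda>t. ennreal (Om n t / t)) < \<infinity>
      \<and> semi_convex_on {-(real n + 2)..real n + 2} (Om n) g"
begin

lemma dm: "dmod (Om n)"
  using Om[of n] unfolding modulus_def dmod_def by auto

lemma sx: "scx g (Om n) (-(real n + 2)) (real n + 2)"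
  using Om[of n] unfolding modulus_def scx_def by auto

lemma Om_nonneg: "t \<ge> 0 \<Longrightarrow> Om n t \<ge> 0"
  using Om[of n] unfolding modulus_def by auto

lemma Om_mono: "0 \<le> s \<Longrightarrow> s \<le> t \<Longrightarrow> Om n s \<le> Om n t"
  using Om[of n] unfolding modulus_def by (auto intro: mono_onD)

definition nn :: "real \<Rightarrow> nat" where "nn u0 = nat \<lceil>\<bar>u0\<bar>\<rceil>"

lemma nn_ge: "\<bar>u0\<bar> \<le> real (nn u0)"
  unfolding nn_def by linarith
lemma nn_lt: "real (nn u0) < \<bar>u0\<bar> + 1"
  unfolding nn_def by linarith

definition pp :: "real \<Rightarrow> real" where
  "pp u0 = scp g (Om (nn u0)) (real (nn u0) + 2) u0"

lemma lower:
  assumes "\<bar>u0\<bar> \<le> real n" "\<bar>u\<bar> \<le> real n + 2"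
  shows "g u \<ge> g u0 + scp g (Om n) (real n + 2) u0 * (u - u0) - \<bar>u - u0\<bar> * Om n (2 * \<bar>u - u0\<bar>)"
  by (rule scx.lower_bound[OF sx]) (use assms in auto)

lemma scp_bounds:
  assumes "\<bar>u0\<bar> \<le> real n"
  shows "scp g (Om n) (real n + 2) u0 \<le> g (u0 + 1) - g u0 + Om n 2"
    and "g u0 - g (u0 - 1) - Om n 2 \<le> scp g (Om n) (real n + 2) u0"
  using scx.scp_upper[OF sx[of n], of u0 1] scx.scp_lower[OF sx[of n], of u0 1] assms by auto

lemma gbound_ex: "\<exists>B. \<forall>v. \<bar>v\<bar> \<le> real n \<longrightarrow> \<bar>g v\<bar> \<le> B"
proof -
  define p0 where "p0 = scp g (Om n) (real n + 2) 0"
  define L where "L = real n + 2"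
  have Lp: "L > 0" unfolding L_def by simp
  have low: "g v \<ge> g 0 - \<bar>p0\<bar> * L - L * Om n (2 * L)" if v: "\<bar>v\<bar> \<le> real n" for v
  proof -
    have "g v \<ge> g 0 + p0 * v - \<bar>v\<bar> * Om n (2 * \<bar>v\<bar>)"
      using lower[of 0 n v] v unfolding p0_def by auto
    moreover have "p0 * v \<ge> - (\<bar>p0\<bar> * L)"
    proof -
      have "\<bar>p0 * v\<bar> \<le> \<bar>p0\<bar> * L" unfolding abs_mult using v unfolding L_def
        by (intro mult_left_mono) auto
      then show ?thesis by linarith
    qed
    moreover have "\<bar>v\<bar> * Om n (2 * \<bar>v\<bar>) \<le> L * Om n (2 * L)"
      using v Om_mono[of "2 * \<bar>v\<bar>" "2 * L" n] Om_nonneg[of "2 * \<bar>v\<bar>" n] unfolding L_def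
      by (intro mult_mono) auto
    ultimately show ?thesis by linarith
  qed
  have up: "g v \<le> \<bar>g (-L)\<bar> + \<bar>g L\<bar> + 2 * L * Om n (2 * L)" if v: "\<bar>v\<bar> \<le> real n" for v
  proof -
    define \<alpha> where "\<alpha> = (L - v) / (2 * L)"
    have a: "\<alpha> \<in> {0<..<1}" unfolding \<alpha>_def using v Lp unfolding L_def by (auto simp: field_simps)
    have comb: "\<alpha> * (-L) + (1 - \<alpha>) * L = v" unfolding \<alpha>_def using Lp by (simp add: field_simps)
    have d: "\<bar>-L - L\<bar> = 2 * L" using Lp by simp
    have mem: "-L \<in> {-(real n + 2)..real n + 2}" "L \<in> {-(real n + 2)..real n + 2}" unfolding L_def by auto
    have "g v \<le> \<alpha> * g (-L) + (1 - \<alpha>) * g L + \<alpha> * (1 - \<alpha>) * (2 * L) * Om n (2 * L)"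
    proof -
      have sc: "semi_convex_on {-(real n + 2)..real n + 2} (Om n) g" using Om[of n] by auto
      have "g (\<alpha> * (-L) + (1 - \<alpha>) * L) \<le> \<alpha> * g (-L) + (1 - \<alpha>) * g L + \<alpha> * (1 - \<alpha>) * \<bar>-L - L\<bar> * Om n \<bar>-L - L\<bar>"
        using sc mem a unfolding semi_convex_on_def by blast
      then show ?thesis by (simp only: comb d)
    qed
    moreover have "\<alpha> * g (-L) \<le> \<bar>g (-L)\<bar>"
    proof -
      have "\<alpha> * g (-L) \<le> \<bar>\<alpha> * g (-L)\<bar>" by simp
      also have "\<dots> \<le> 1 * \<bar>g (-L)\<bar>" unfolding abs_mult using a by (intro mult_right_mono) auto
      finally show ?thesis by simp
    qed
    moreover have "(1 - \<alpha>) * g L \<le> \<bar>g L\<bar>"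
    proof -
      have "(1 - \<alpha>) * g L \<le> \<bar>(1 - \<alpha>) * g L\<bar>" by simp
      also have "\<dots> \<le> 1 * \<bar>g L\<bar>" unfolding abs_mult using a by (intro mult_right_mono) auto
      finally show ?thesis by simp
    qed
    moreover have "\<alpha> * (1 - \<alpha>) * (2 * L) * Om n (2 * L) \<le> 1 * (2 * L) * Om n (2 * L)"
    proof -
      have "\<alpha> * (1 - \<alpha>) \<le> 1" using a by (auto intro: mult_le_one)
      then show ?thesis using Lp Om_nonneg[of "2 * L" n] by (intro mult_right_mono) auto
    qed
    ultimately show ?thesis by linarith
  qed
  show ?thesis
  proof (intro exI allI impI)
    fix v assume v: "\<bar>v\<bar> \<le> real n"
    define lw where "lw = g 0 - \<bar>p0\<bar> * L - L * Om n (2 * L)"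
    define hg where "hg = \<bar>g (-L)\<bar> + \<bar>g L\<bar> + 2 * L * Om n (2 * L)"
    have "lw \<le> g v" "g v \<le> hg" using low[OF v] up[OF v] unfolding lw_def hg_def by auto
    moreover have "- \<bar>lw\<bar> \<le> lw" "hg \<le> \<bar>hg\<bar>" "0 \<le> \<bar>lw\<bar>" "0 \<le> \<bar>hg\<bar>" by auto
    ultimately have "g v \<le> \<bar>lw\<bar> + \<bar>hg\<bar>" "- g v \<le> \<bar>lw\<bar> + \<bar>hg\<bar>" by linarith+
    then show "\<bar>g v\<bar> \<le> \<bar>lw\<bar> + \<bar>hg\<bar>" by (simp add: abs_le_iff)
  qed
qed

definition B0 :: "nat \<Rightarrow> real" where "B0 n = (SOME B. \<forall>v. \<bar>v\<bar> \<le> real n \<longrightarrow> \<bar>g v\<bar> \<le> B)"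
definition Bg :: "nat \<Rightarrow> real" where "Bg n = (\<Sum>i\<le>n. \<bar>B0 i\<bar>)"

lemma Bg_bound: "\<bar>v\<bar> \<le> real n \<Longrightarrow> \<bar>g v\<bar> \<le> Bg n"
proof -
  assume v: "\<bar>v\<bar> \<le> real n"
  have "\<bar>g v\<bar> \<le> B0 n" using someI_ex[OF gbound_ex[of n]] v unfolding B0_def by blast
  also have "\<dots> \<le> \<bar>B0 n\<bar>" by simp
  also have "\<dots> \<le> Bg n" unfolding Bg_def by (rule member_le_sum) auto
  finally show ?thesis .
qed

lemma Bg_mono: "m \<le> n \<Longrightarrow> Bg m \<le> Bg n"
  unfolding Bg_def by (rule sum_mono2) auto

lemma Bg_nonneg: "Bg n \<ge> 0"
  unfolding Bg_def by (auto intro: sum_nonneg)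

definition lam :: "nat \<Rightarrow> real" where "lam n = Om n (4 * real n + 8)"
definition W :: "nat \<Rightarrow> real" where "W n = (\<Sum>i\<le>n. Om i 2 + lam i + Zs (Om i))"

lemma Zs_nonneg: "Zs (Om i) \<ge> 0"
  unfolding Zs_def by (rule suminf_nonneg[OF dmod.sumZ[OF dm]]) (intro Om_nonneg, simp add: less_imp_le[OF rk_pos])

lemma W_terms_nonneg: "Om i 2 + lam i + Zs (Om i) \<ge> 0"
  using Om_nonneg[of 2 i] Om_nonneg[of "4 * real i + 8" i] Zs_nonneg[of i] unfolding lam_def by auto

lemma W_mono: "m \<le> n \<Longrightarrow> W m \<le> W n"
  unfolding W_def by (rule sum_mono2) (auto simp: W_terms_nonneg)

lemma W_nonneg: "W n \<ge> 0"
  unfolding W_def by (rule sum_nonneg) (rule W_terms_nonneg)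

lemma W_ge: "Om n 2 \<le> W n" "lam n \<le> W n" "Zs (Om n) \<le> W n"
proof -
  have "Om n 2 + lam n + Zs (Om n) \<le> W n" unfolding W_def
    by (rule member_le_sum) (auto simp: W_terms_nonneg)
  then show "Om n 2 \<le> W n" "lam n \<le> W n" "Zs (Om n) \<le> W n"
    using Om_nonneg[of 2 n] Om_nonneg[of "4 * real n + 8" n] Zs_nonneg[of n] unfolding lam_def by auto
qed

lemma pp_bound: "\<bar>pp u0\<bar> \<le> 2 * Bg (nn u0 + 1) + W (nn u0)"
proof -
  define n where "n = nn u0"
  have u0: "\<bar>u0\<bar> \<le> real n" unfolding n_def by (rule nn_ge)
  have b1: "\<bar>g (u0 + 1)\<bar> \<le> Bg (n + 1)" "\<bar>g u0\<bar> \<le> Bg (n + 1)" "\<bar>g (u0 - 1)\<bar> \<le> Bg (n + 1)"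
    using u0 by (auto intro!: Bg_bound)
  have "pp u0 \<le> g (u0 + 1) - g u0 + Om n 2" "g u0 - g (u0 - 1) - Om n 2 \<le> pp u0"
    unfolding pp_def n_def[symmetric] using scp_bounds[OF u0] by auto
  then show ?thesis using b1 W_ge(1)[of n] Om_nonneg[of 2 n] unfolding n_def[symmetric] by (auto simp: abs_le_iff)
qed

end


context mainloc
begin

definition cc :: "nat \<Rightarrow> real" where
  "cc K = 2 * Bg (K+3) + (2 * Bg (K+3) + W (K+2)) * (2 * real K + 2) + (5 * real K + 2) * W (K+2)"

lemma cc_nonneg: "cc K \<ge> 0"
  unfolding cc_def using Bg_nonneg[of "K+3"] W_nonneg[of "K+2"] by auto

definition S :: "real \<Rightarrow> real \<Rightarrow> real \<Rightarrow> real" where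
  "S u0 x y = g u0 + pp u0 * ((x+y)/2 - u0) + Tloc (Om (nn u0)) (x - u0) (y - u0)
     - lam (nn u0) * (x - u0) * (y - u0) + Gam cc x y + gam cc u0 + dgam cc u0 * ((x+y)/2 - u0)"

lemma S_sym: "S u0 x y = S u0 y x"
  unfolding S_def using dmod.Tloc_sym[OF dm] Gam_sym by (simp add: algebra_simps)

lemma S_cvx: "convex_on UNIV (\<lambda>x. S u0 x y)"
proof -
  define n where "n = nn u0"
  define A where "A = pp u0 / 2 - lam n * (y - u0) + dgam cc u0 / 2"
  define B where "B = g u0 + pp u0 * (y/2 - u0) + lam n * u0 * (y - u0) + gam cc u0 + dgam cc u0 * (y/2 - u0)"
  have e: "(\<lambda>x. S u0 x y) = (\<lambda>x. (A * x + B) + (Tloc (Om n) (x - u0) (y - u0) + Gam cc x y))"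
    unfolding S_def A_def B_def n_def by (rule ext) (simp add: algebra_simps add_divide_distrib)
  show ?thesis unfolding e
    by (intro cvx_add cvx_affine cvx_shift[OF dmod.Tloc_cvx[OF dm]] Gam_cvx cc_nonneg)
qed

lemma S_self: "S u u u = g u"
  unfolding S_def using dmod.Tloc_00[OF dm] Gam_diag[of cc u] by simp

lemma lam_nonneg: "lam n \<ge> 0" unfolding lam_def by (rule Om_nonneg) simp

lemma S_diag_le: "S u0 u u \<le> g u"
proof -
  define n where "n = nn u0"
  define t where "t = u - u0"
  define D where "D = gam cc u - gam cc u0 - dgam cc u0 * (u - u0)"
  have u0n: "\<bar>u0\<bar> \<le> real n" unfolding n_def by (rule nn_ge)
  have eq: "S u0 u u = g u0 + pp u0 * t + Tloc (Om n) t t - lam n * t * t - D"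
    unfolding S_def D_def t_def n_def using Gam_diag[of cc u] by (simp add: algebra_simps)
  have Dnn: "D \<ge> 0" unfolding D_def by (rule Dgam_nonneg[OF cc_nonneg])
  have Tnp: "Tloc (Om n) t t \<le> 0" by (rule dmod.Tloc_diag_nonpos[OF dm])
  have ln: "lam n \<ge> 0" by (rule lam_nonneg)
  show ?thesis
  proof (cases "\<bar>u\<bar> \<le> real n + 2")
    case True
    have low: "g u \<ge> g u0 + pp u0 * t - \<bar>t\<bar> * Om n (2 * \<bar>t\<bar>)"
      using lower[OF u0n True] unfolding pp_def n_def[symmetric] t_def .
    show ?thesis
    proof (cases "\<bar>t\<bar> \<le> 1")
      case True
      have "Tloc (Om n) t t \<le> - \<bar>t\<bar> * Om n (2 * \<bar>t\<bar>)" by (rule dmod.Tloc_diag[OF dm True])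
      moreover have "lam n * t * t \<ge> 0" by (metis ln mult.assoc mult_nonneg_nonneg zero_le_square)
      ultimately show ?thesis unfolding eq using low Dnn by linarith
    next
      case False
      have t1: "\<bar>t\<bar> \<le> 2 * real n + 2" unfolding t_def using u0n \<open>\<bar>u\<bar> \<le> real n + 2\<close> by linarith
      have t2: "2 * \<bar>t\<bar> \<le> 4 * real n + 8" using t1 by linarith
      have "Om n (2 * \<bar>t\<bar>) \<le> lam n" unfolding lam_def by (rule Om_mono) (use t2 in auto)
      then have "\<bar>t\<bar> * Om n (2 * \<bar>t\<bar>) \<le> \<bar>t\<bar> * lam n" by (intro mult_left_mono) auto
      also have "\<dots> \<le> \<bar>t\<bar> * \<bar>t\<bar> * lam n"
      proof -
        have "\<bar>t\<bar> * 1 \<le> \<bar>t\<bar> * \<bar>t\<bar>" using False by (intro mult_left_mono) auto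
        then show ?thesis using ln by (intro mult_right_mono) auto
      qed
      also have "\<dots> = lam n * t * t" by (simp add: abs_mult_self)
      finally show ?thesis unfolding eq using low Dnn Tnp by linarith
    qed
  next
    case False
    define K where "K = nat \<lceil>\<bar>u\<bar>\<rceil> - 2"
    have c1: "\<lceil>\<bar>u\<bar>\<rceil> \<ge> int n + 3" using False by linarith
    have K1: "real K = real_of_int \<lceil>\<bar>u\<bar>\<rceil> - 2" unfolding K_def using c1 by auto
    have Kn: "real K \<ge> real n + 1" using K1 c1 by linarith
    have Ku: "real K \<le> \<bar>u\<bar> - 1" using K1 by linarith
    have Ku2: "\<bar>u\<bar> \<le> real (K + 2)" using K1 by linarith
    have "D \<ge> cc K * (phi K u - phi K u0 - dphi K u0 * (u - u0))"
      unfolding D_def by (rule Dgam_ge[OF cc_nonneg])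
    moreover have "phi K u - phi K u0 - dphi K u0 * (u - u0) \<ge> (\<bar>u\<bar> - real K)^2"
      by (rule Dphi_far1) (use u0n Kn Ku in auto)
    moreover have "(\<bar>u\<bar> - real K)^2 \<ge> 1"
    proof -
      have "1 \<le> \<bar>u\<bar> - real K" using Ku by linarith
      then have "1 * 1 \<le> (\<bar>u\<bar> - real K) * (\<bar>u\<bar> - real K)" by (intro mult_mono) auto
      then show ?thesis by (simp add: power2_eq_square)
    qed
    ultimately have DK: "D \<ge> cc K"
      using cc_nonneg[of K] by (smt (verit) mult_left_mono mult_cancel_left1)
    have nK: "n \<le> K + 3" "n + 1 \<le> K + 3" "n \<le> K + 2" using Kn by linarith+
    have b1: "\<bar>g u0\<bar> \<le> Bg (K+3)" using Bg_bound[OF u0n] Bg_mono[OF nK(1)] by linarith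
    have b2: "\<bar>g u\<bar> \<le> Bg (K+3)" using Bg_bound[OF Ku2] Bg_mono[of "K+2" "K+3"] by linarith
    have b3: "\<bar>pp u0\<bar> \<le> 2 * Bg (K+3) + W (K+2)"
      using pp_bound[of u0] Bg_mono[OF nK(2)] W_mono[OF nK(3)] unfolding n_def[symmetric] by linarith
    have Ku3: "\<bar>u\<bar> \<le> real K + 2" using K1 by linarith
    have tb: "\<bar>t\<bar> \<le> 2 * real K + 2" unfolding t_def using u0n Kn Ku3 by linarith
    have "pp u0 * t \<le> \<bar>pp u0\<bar> * \<bar>t\<bar>" by (simp add: abs_mult[symmetric])
    also have "\<dots> \<le> (2 * Bg (K+3) + W (K+2)) * (2 * real K + 2)"
      using b3 tb by (intro mult_mono) auto
    finally have pt: "pp u0 * t \<le> (2 * Bg (K+3) + W (K+2)) * (2 * real K + 2)" .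
    have "(5 * real K + 2) * W (K+2) \<ge> 0" using W_nonneg by auto
    then have "g u0 + pp u0 * t - g u \<le> cc K" unfolding cc_def using b1 b2 pt by linarith
    moreover have "lam n * t * t \<ge> 0" by (metis ln mult.assoc mult_nonneg_nonneg zero_le_square)
    ultimately show ?thesis unfolding eq using DK Tnp by linarith
  qed
qed


lemma Bg_W_mono_prod:
  assumes "n \<le> R" "mm \<ge> 0"
  shows "(2 * Bg (n+1) + W n) * (mm + real n) \<le> (2 * Bg (R+1) + W R) * (mm + real R)"
proof (rule mult_mono)
  show "2 * Bg (n+1) + W n \<le> 2 * Bg (R+1) + W R"
    using Bg_mono[of "n+1" "R+1"] W_mono[of n R] assms by auto
  show "mm + real n \<le> mm + real R" using assms by auto
  show "0 \<le> 2 * Bg (R+1) + W R" using Bg_nonneg W_nonneg by (auto intro: add_nonneg_nonneg)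
  show "0 \<le> mm + real n" using assms by auto
qed

lemma S_bound: "\<exists>M. \<forall>u0. S u0 x y \<le> M"
proof -
  define m where "m = (x + y) / 2"
  define d where "d = x - y"
  define a where "a = \<bar>m\<bar> + \<bar>d\<bar> + d^2"
  define R where "R = nat \<lceil>a\<rceil> + 2"
  define E where "E n = Bg n + (2 * Bg (n+1) + W n) * (\<bar>m\<bar> + real n) + (2 + 4*\<bar>d\<bar> + d^2) * W n" for n
  define G0 where "G0 = Gam cc x y + gam cc m"
  have a0: "a \<ge> 0" unfolding a_def by auto
  have dd: "2 + 4*\<bar>d\<bar> + d^2 \<ge> 0" by auto
  have Emono: "E n \<le> E R" if "n \<le> R" for n
  proof -
    have "Bg n \<le> Bg R" using Bg_mono that by auto
    moreover have "(2 * Bg (n+1) + W n) * (\<bar>m\<bar> + real n) \<le> (2 * Bg (R+1) + W R) * (\<bar>m\<bar> + real R)"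
      by (rule Bg_W_mono_prod) (use that in auto)
    moreover have "(2 + 4*\<bar>d\<bar> + d^2) * W n \<le> (2 + 4*\<bar>d\<bar> + d^2) * W R"
      using W_mono[OF that] dd by (intro mult_left_mono) auto
    ultimately show ?thesis unfolding E_def by linarith
  qed
  have ERnn: "E R \<ge> 0"
  proof -
    have "(2 * Bg (R+1) + W R) * (\<bar>m\<bar> + real R) \<ge> 0"
      using Bg_nonneg W_nonneg by (intro mult_nonneg_nonneg) (auto intro: add_nonneg_nonneg)
    moreover have "(2 + 4*\<bar>d\<bar> + d^2) * W R \<ge> 0" using W_nonneg dd by auto
    ultimately show ?thesis unfolding E_def using Bg_nonneg[of R] by linarith
  qed
  show ?thesis
  proof (intro exI allI)
    fix u0
    define n where "n = nn u0"
    define Dm where "Dm = gam cc m - gam cc u0 - dgam cc u0 * (m - u0)"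
    have u0n: "\<bar>u0\<bar> \<le> real n" unfolding n_def by (rule nn_ge)
    have u0n2: "real n < \<bar>u0\<bar> + 1" unfolding n_def by (rule nn_lt)
    have eq: "S u0 x y = G0 + g u0 + pp u0 * (m - u0) + Tloc (Om n) (x - u0) (y - u0)
        - lam n * ((x - u0) * (y - u0)) - Dm"
      unfolding S_def G0_def Dm_def n_def m_def by (simp add: algebra_simps)
    have Dnn: "Dm \<ge> 0" unfolding Dm_def by (rule Dgam_nonneg[OF cc_nonneg])
    have b1: "g u0 \<le> Bg n" using Bg_bound[OF u0n] by linarith
    have b2: "pp u0 * (m - u0) \<le> (2 * Bg (n+1) + W n) * (\<bar>m\<bar> + real n)"
    proof -
      have "pp u0 * (m - u0) \<le> \<bar>pp u0\<bar> * \<bar>m - u0\<bar>" by (simp add: abs_mult[symmetric])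
      also have "\<dots> \<le> (2 * Bg (n+1) + W n) * (\<bar>m\<bar> + real n)"
      proof (rule mult_mono)
        show "\<bar>pp u0\<bar> \<le> 2 * Bg (n+1) + W n" using pp_bound[of u0] unfolding n_def .
        show "\<bar>m - u0\<bar> \<le> \<bar>m\<bar> + real n" using u0n by linarith
      qed (use Bg_nonneg W_nonneg in \<open>auto intro: add_nonneg_nonneg\<close>)
      finally show ?thesis .
    qed
    have b3: "Tloc (Om n) (x - u0) (y - u0) \<le> (2 + 4*\<bar>d\<bar>) * W n"
    proof -
      have "Tloc (Om n) (x - u0) (y - u0) \<le> (2 + 4 * \<bar>(x - u0) - (y - u0)\<bar>) * Zs (Om n)"
        by (rule dmod.Tloc_upper[OF dm])
      also have "\<dots> = (2 + 4*\<bar>d\<bar>) * Zs (Om n)" unfolding d_def by simp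
      also have "\<dots> \<le> (2 + 4*\<bar>d\<bar>) * W n" using W_ge(3)[of n] by (intro mult_left_mono) auto
      finally show ?thesis .
    qed
    have b4: "- (lam n * ((x - u0) * (y - u0))) \<le> d^2 * W n"
    proof -
      have xy: "(x - u0) * (y - u0) = (m - u0)^2 - d^2 / 4"
        unfolding m_def d_def by (simp add: power2_eq_square field_simps)
      have "- ((x - u0) * (y - u0)) \<le> d^2" unfolding xy using zero_le_power2[of "m - u0"] zero_le_power2[of d] by linarith
      then have "lam n * (- ((x - u0) * (y - u0))) \<le> lam n * d^2" using lam_nonneg by (intro mult_left_mono) auto
      also have "\<dots> \<le> W n * d^2" using W_ge(2)[of n] by (intro mult_right_mono) auto
      finally show ?thesis by (simp add: mult.commute)
    qed
    have main: "S u0 x y \<le> G0 + E n - Dm"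
      unfolding eq E_def using b1 b2 b3 b4 by (simp add: algebra_simps)
    show "S u0 x y \<le> G0 + E R"
    proof (cases "n \<le> R")
      case True then show ?thesis using main Emono[OF True] Dnn by linarith
    next
      case False
      define K where "K = n - 2"
      have nK: "n = K + 2" unfolding K_def using False R_def by auto
      have aK: "a \<le> real K"
      proof -
        have "nat \<lceil>a\<rceil> + 2 < n" using False unfolding R_def by (simp only: not_le)
        then have "nat \<lceil>a\<rceil> \<le> K" unfolding K_def by linarith
        then have "real (nat \<lceil>a\<rceil>) \<le> real K" by (rule of_nat_mono)
        then show ?thesis using real_nat_ceiling_ge[of a] by linarith
      qed
      have mK: "\<bar>m\<bar> \<le> real K" "\<bar>d\<bar> \<le> real K" "d^2 \<le> real K"
        using aK unfolding a_def using zero_le_power2[of d] abs_ge_zero[of m] abs_ge_zero[of d] by linarith+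
      have uK: "real K + 1 < \<bar>u0\<bar>" using u0n2 nK by auto
      have "Dm \<ge> cc K * (phi K m - phi K u0 - dphi K u0 * (m - u0))"
        unfolding Dm_def by (rule Dgam_ge[OF cc_nonneg])
      moreover have "phi K m - phi K u0 - dphi K u0 * (m - u0) \<ge> (\<bar>u0\<bar> - real K)^2"
        by (rule Dphi_far2) (use mK uK in auto)
      moreover have "(\<bar>u0\<bar> - real K)^2 \<ge> 1"
      proof -
        have "1 \<le> \<bar>u0\<bar> - real K" using uK by linarith
        then have "1 * 1 \<le> (\<bar>u0\<bar> - real K) * (\<bar>u0\<bar> - real K)" by (intro mult_mono) auto
        then show ?thesis by (simp add: power2_eq_square)
      qed
      ultimately have DK: "Dm \<ge> cc K"
        using cc_nonneg[of K] by (smt (verit) mult_left_mono mult_cancel_left1)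
      have EK: "E n \<le> cc K"
      proof -
        have e1: "Bg (K+2) \<le> 2 * Bg (K+3)" using Bg_mono[of "K+2" "K+3"] Bg_nonneg[of "K+3"] by auto
        have e2: "(2 * Bg (K+3) + W (K+2)) * (\<bar>m\<bar> + real (K+2)) \<le> (2 * Bg (K+3) + W (K+2)) * (2 * real K + 2)"
          using mK Bg_nonneg[of "K+3"] W_nonneg[of "K+2"] by (intro mult_left_mono) auto
        have e3: "(2 + 4*\<bar>d\<bar> + d^2) * W (K+2) \<le> (5 * real K + 2) * W (K+2)"
          using mK W_nonneg[of "K+2"] by (intro mult_right_mono) auto
        have eq3: "K + 2 + 1 = K + 3" by simp
        show ?thesis unfolding E_def cc_def nK eq3 using e1 e2 e3 by linarith
      qed
      show ?thesis using main DK EK ERnn by linarith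
    qed
  qed
qed

definition F :: "real \<Rightarrow> real \<Rightarrow> real" where "F x y = (SUP u0. S u0 x y)"

lemma bdd: "bdd_above (range (\<lambda>u0. S u0 x y))"
  using S_bound[of x y] unfolding bdd_above_def by auto

lemma F_sym: "F x y = F y x"
  unfolding F_def using S_sym by simp

lemma F_diag: "F u u = g u"
  unfolding F_def by (rule cSup_eq_maximum) (use S_self S_diag_le in \<open>auto intro: range_eqI[of _ _ u]\<close>)

lemma F_cvx: "convex_on UNIV (\<lambda>x. F x y)"
  unfolding cvx_iff
proof (intro allI impI)
  fix x1 x2 t :: real assume t: "0 \<le> t" "t \<le> 1"
  show "F ((1-t)*x1 + t*x2) y \<le> (1-t) * F x1 y + t * F x2 y"
    unfolding F_def
  proof (rule cSUP_least)
    fix u0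
    have "S u0 ((1-t)*x1 + t*x2) y \<le> (1-t) * S u0 x1 y + t * S u0 x2 y"
      using S_cvx[of u0 y] t unfolding cvx_iff by auto
    also have "\<dots> \<le> (1-t) * (SUP u0. S u0 x1 y) + t * (SUP u0. S u0 x2 y)"
      using t cSUP_upper[OF _ bdd[of x1 y], of u0] cSUP_upper[OF _ bdd[of x2 y], of u0]
      by (intro add_mono mult_left_mono) auto
    finally show "S u0 ((1-t)*x1 + t*x2) y \<le> (1-t) * (SUP u0. S u0 x1 y) + t * (SUP u0. S u0 x2 y)" .
  qed simp
qed

theorem main: "\<exists>f :: real \<times> real \<Rightarrow> real. separately_convex f \<and> (\<forall>u. f (u, u) = g u)"
proof (intro exI conjI allI)
  show "separately_convex (\<lambda>p. F (fst p) (snd p))"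
    unfolding separately_convex_def
  proof (intro conjI allI)
    fix y show "convex_on UNIV (\<lambda>x. F (fst (x, y)) (snd (x, y)))" using F_cvx by simp
  next
    fix x show "convex_on UNIV (\<lambda>y. F (fst (x, y)) (snd (x, y)))" using F_cvx[of x] F_sym by simp
  qed
  fix u show "F (fst (u, u)) (snd (u, u)) = g u" using F_diag by simp
qed

end


theorem corollary7p4:
  fixes g :: "real \<Rightarrow> real"
  assumes "\<And>I. is_interval I \<Longrightarrow> bounded I \<Longrightarrow>
             \<exists>\<omega>. modulus \<omega>
                 \<and> set_nn_integral lborel {0<..<1} (\<lambda>t. ennreal (\<omega> t / t)) < \<infinity>
                 \<and> semi_convex_on I \<omega> g"
  shows "\<exists>f :: real \<times> real \<Rightarrow> real. separately_convex f \<and> (\<forall>u. f (u, u) = g u)"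
proof -
  have "\<forall>n::nat. \<exists>\<omega>. modulus \<omega> \<and> set_nn_integral lborel {0<..<1} (\<lambda>t. ennreal (\<omega> t / t)) < \<infinity>
      \<and> semi_convex_on {-(real n + 2)..real n + 2} \<omega> g"
  proof
    fix n :: nat
    show "\<exists>\<omega>. modulus \<omega> \<and> set_nn_integral lborel {0<..<1} (\<lambda>t. ennreal (\<omega> t / t)) < \<infinity>
      \<and> semi_convex_on {-(real n + 2)..real n + 2} \<omega> g"
      by (rule assms) (auto simp: is_interval_cc)
  qed
  then obtain Om where Om: "\<And>n. modulus (Om n) \<and> set_nn_integral lborel {0<..<1} (\<lambda>t. ennreal (Om n t / t)) < \<infinity>
      \<and> semi_convex_on {-(real n + 2)..real n + 2} (Om n) g"
    by metis
  interpret mainloc g Om by (unfold_locales) (rule Om)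
  show ?thesis by (rule main)
qed


end
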